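(* Let $\mathcal{A},\mathcal{D}$ be categories and let $(\mathcal{E},\mathcal{M})$ be any orthogonal factorization system on $[\mathcal{A},\mathcal{D}]$. If all natural transformations in $\mathcal{M}$ are cartesian, then $(\mathcal{E},\mathcal{M})$ restricts to an orthogonal factorization system on $\mathrm{CartNt}[\mathcal{A},\mathcal{D}]$, the category of all functors $\mathcal{A}\to\mathcal{D}$ and cartesian natural transformations.
   Context: A natural transformation is cartesian if all its naturality squares are pullbacks. An orthogonal factorization system $(\mathcal{E},\mathcal{M})$: both classes contain all isomorphisms and are closed under composition; each commuting square $g\circ e = m\circ f$ with $e\in\mathcal{E}$, $m\in\mathcal{M}$ has a unique diagonal $d$ with $d\circ e=f$, $m\circ d = g$; every morphism factors as $m\circ e$ with $e\in\mathcal{E}$, $m\in\mathcal{M}$. Restriction means intersecting both classes with the cartesian natural transformations. *)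

theory Defs
  imports Main "HOL-Library.FuncSet"
begin

record ('o, 'a) cat =
  Obj  :: "'o set"
  Arr  :: "'a set"
  Dom  :: "'a \<Rightarrow> 'o"
  Cod  :: "'a \<Rightarrow> 'o"
  Id   :: "'o \<Rightarrow> 'a"
  Comp :: "'a \<Rightarrow> 'a \<Rightarrow> 'a"   (* Comp C g f = g o f, for Cod f = Dom g *)

definition hom :: "('o, 'a) cat \<Rightarrow> 'o \<Rightarrow> 'o \<Rightarrow> 'a set" where
  "hom C x y = {f \<in> Arr C. Dom C f = x \<and> Cod C f = y}"

definition category :: "('o, 'a) cat \<Rightarrow> bool" where
  "category C \<longleftrightarrow>
     (\<forall>f \<in> Arr C. Dom C f \<in> Obj C \<and> Cod C f \<in> Obj C) \<and>
     (\<forall>x \<in> Obj C. Id C x \<in> hom C x x) \<and>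
     (\<forall>f \<in> Arr C. \<forall>g \<in> Arr C. Cod C f = Dom C g \<longrightarrow>
         Comp C g f \<in> hom C (Dom C f) (Cod C g)) \<and>
     (\<forall>f \<in> Arr C. Comp C f (Id C (Dom C f)) = f \<and> Comp C (Id C (Cod C f)) f = f) \<and>
     (\<forall>f \<in> Arr C. \<forall>g \<in> Arr C. \<forall>h \<in> Arr C.
         Cod C f = Dom C g \<longrightarrow> Cod C g = Dom C h \<longrightarrow>
         Comp C h (Comp C g f) = Comp C (Comp C h g) f)"

definition iso :: "('o, 'a) cat \<Rightarrow> 'a \<Rightarrow> bool" where
  "iso C f \<longleftrightarrow> f \<in> Arr C \<and>
     (\<exists>g \<in> hom C (Cod C f) (Dom C f).
        Comp C g f = Id C (Dom C f) \<and> Comp C f g = Id C (Cod C f))"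

definition pullback :: "('o, 'a) cat \<Rightarrow> 'a \<Rightarrow> 'a \<Rightarrow> 'a \<Rightarrow> 'a \<Rightarrow> bool" where
  "pullback C p q f g \<longleftrightarrow>
     p \<in> Arr C \<and> q \<in> Arr C \<and> f \<in> Arr C \<and> g \<in> Arr C \<and>
     Dom C p = Dom C q \<and> Cod C p = Dom C f \<and> Cod C q = Dom C g \<and> Cod C f = Cod C g \<and>
     Comp C f p = Comp C g q \<and>
     (\<forall>x \<in> Arr C. \<forall>y \<in> Arr C.
        Dom C x = Dom C y \<and> Cod C x = Dom C f \<and> Cod C y = Dom C g \<and>
        Comp C f x = Comp C g y \<longrightarrow>
        (\<exists>!u. u \<in> hom C (Dom C x) (Dom C p) \<and> Comp C p u = x \<and> Comp C q u = y))"

definition ofs :: "('o, 'a) cat \<Rightarrow> 'a set \<Rightarrow> 'a set \<Rightarrow> bool" where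
  "ofs C E M \<longleftrightarrow>
     E \<subseteq> Arr C \<and> M \<subseteq> Arr C \<and>
     {f. iso C f} \<subseteq> E \<and> {f. iso C f} \<subseteq> M \<and>
     (\<forall>f \<in> E. \<forall>g \<in> E. Cod C f = Dom C g \<longrightarrow> Comp C g f \<in> E) \<and>
     (\<forall>f \<in> M. \<forall>g \<in> M. Cod C f = Dom C g \<longrightarrow> Comp C g f \<in> M) \<and>
     (\<forall>e \<in> E. \<forall>m \<in> M. \<forall>f \<in> Arr C. \<forall>g \<in> Arr C.
        Dom C f = Dom C e \<and> Cod C f = Dom C m \<and> Dom C g = Cod C e \<and> Cod C g = Cod C m \<and>
        Comp C g e = Comp C m f \<longrightarrow>
        (\<exists>!d. d \<in> hom C (Cod C e) (Dom C m) \<and> Comp C d e = f \<and> Comp C m d = g)) \<and>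
     (\<forall>h \<in> Arr C. \<exists>e \<in> E. \<exists>m \<in> M.
        Cod C e = Dom C m \<and> h = Comp C m e)"

record ('oa, 'aa, 'od, 'ad) ftor =
  fobj :: "'oa \<Rightarrow> 'od"
  farr :: "'aa \<Rightarrow> 'ad"

text \<open>Functors are taken extensional (undefined off the carriers), so that
  equality of functors is the right notion of equality of objects of the functor category.\<close>
definition is_functor :: "('oa, 'aa) cat \<Rightarrow> ('od, 'ad) cat \<Rightarrow> ('oa, 'aa, 'od, 'ad) ftor \<Rightarrow> bool" where
  "is_functor A D F \<longleftrightarrow>
     fobj F \<in> extensional (Obj A) \<and> farr F \<in> extensional (Arr A) \<and>
     (\<forall>x \<in> Obj A. fobj F x \<in> Obj D) \<and>
     (\<forall>f \<in> Arr A. farr F f \<in> hom D (fobj F (Dom A f)) (fobj F (Cod A f))) \<and>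
     (\<forall>x \<in> Obj A. farr F (Id A x) = Id D (fobj F x)) \<and>
     (\<forall>f \<in> Arr A. \<forall>g \<in> Arr A. Cod A f = Dom A g \<longrightarrow>
        farr F (Comp A g f) = Comp D (farr F g) (farr F f))"

type_synonym ('oa, 'aa, 'od, 'ad) nt =
  "('oa, 'aa, 'od, 'ad) ftor \<times> ('oa, 'aa, 'od, 'ad) ftor \<times> ('oa \<Rightarrow> 'ad)"

definition natural_transformation ::
  "('oa, 'aa) cat \<Rightarrow> ('od, 'ad) cat \<Rightarrow> ('oa, 'aa, 'od, 'ad) nt \<Rightarrow> bool" where
  "natural_transformation A D \<tau> \<longleftrightarrow>
     (case \<tau> of (F, G, \<eta>) \<Rightarrow>
       is_functor A D F \<and> is_functor A D G \<and> \<eta> \<in> extensional (Obj A) \<and>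
       (\<forall>x \<in> Obj A. \<eta> x \<in> hom D (fobj F x) (fobj G x)) \<and>
       (\<forall>u \<in> Arr A. Comp D (\<eta> (Cod A u)) (farr F u) = Comp D (farr G u) (\<eta> (Dom A u))))"

definition cartesian ::
  "('oa, 'aa) cat \<Rightarrow> ('od, 'ad) cat \<Rightarrow> ('oa, 'aa, 'od, 'ad) nt \<Rightarrow> bool" where
  "cartesian A D \<tau> \<longleftrightarrow> natural_transformation A D \<tau> \<and>
     (case \<tau> of (F, G, \<eta>) \<Rightarrow>
       (\<forall>u \<in> Arr A. pullback D (farr F u) (\<eta> (Dom A u)) (\<eta> (Cod A u)) (farr G u)))"

definition functor_cat ::
  "('oa, 'aa) cat \<Rightarrow> ('od, 'ad) cat \<Rightarrow>
   (('oa, 'aa, 'od, 'ad) ftor, ('oa, 'aa, 'od, 'ad) nt) cat" where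
  "functor_cat A D =
     \<lparr> Obj = {F. is_functor A D F},
       Arr = {\<tau>. natural_transformation A D \<tau>},
       Dom = (\<lambda>(F, G, \<eta>). F),
       Cod = (\<lambda>(F, G, \<eta>). G),
       Id = (\<lambda>F. (F, F, \<lambda>x \<in> Obj A. Id D (fobj F x))),
       Comp = (\<lambda>(G', H, \<theta>) (F, G, \<eta>). (F, H, \<lambda>x \<in> Obj A. Comp D (\<theta> x) (\<eta> x))) \<rparr>"

definition cart_functor_cat ::
  "('oa, 'aa) cat \<Rightarrow> ('od, 'ad) cat \<Rightarrow>
   (('oa, 'aa, 'od, 'ad) ftor, ('oa, 'aa, 'od, 'ad) nt) cat" where
  "cart_functor_cat A D = (functor_cat A D) \<lparr> Arr := {\<tau>. cartesian A D \<tau>} \<rparr>"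

end

theory Submission
  imports Defs
begin

lemma cat_comp:
  assumes "category D" "f \<in> Arr D" "g \<in> Arr D" "Cod D f = Dom D g"
  shows "Comp D g f \<in> Arr D" "Dom D (Comp D g f) = Dom D f" "Cod D (Comp D g f) = Cod D g"
  using assms unfolding category_def hom_def by auto

lemma cat_assoc:
  assumes "category D" "f \<in> Arr D" "g \<in> Arr D" "h \<in> Arr D"
    "Cod D f = Dom D g" "Cod D g = Dom D h"
  shows "Comp D h (Comp D g f) = Comp D (Comp D h g) f"
  using assms unfolding category_def by blast

lemma pb_paste:
  assumes D: "category D" and P1: "pullback D p q f g" and P2: "pullback D g q' f' g'"
  shows "pullback D p (Comp D q' q) (Comp D f' f) g'"
proof -
  have t1: "p \<in> Arr D" "q \<in> Arr D" "f \<in> Arr D" "g \<in> Arr D"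
    "Dom D p = Dom D q" "Cod D p = Dom D f" "Cod D q = Dom D g" "Cod D f = Cod D g"
    "Comp D f p = Comp D g q"
    using P1 unfolding pullback_def by auto
  have u1: "\<And>x y. x \<in> Arr D \<Longrightarrow> y \<in> Arr D \<Longrightarrow>
        Dom D x = Dom D y \<Longrightarrow> Cod D x = Dom D f \<Longrightarrow> Cod D y = Dom D g \<Longrightarrow>
        Comp D f x = Comp D g y \<Longrightarrow>
        (\<exists>!u. u \<in> hom D (Dom D x) (Dom D p) \<and> Comp D p u = x \<and> Comp D q u = y)"
    using P1 unfolding pullback_def by blast
  have t2: "q' \<in> Arr D" "f' \<in> Arr D" "g' \<in> Arr D"
    "Dom D g = Dom D q'" "Cod D g = Dom D f'" "Cod D q' = Dom D g'" "Cod D f' = Cod D g'"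
    "Comp D f' g = Comp D g' q'"
    using P2 unfolding pullback_def by auto
  have u2: "\<And>x y. x \<in> Arr D \<Longrightarrow> y \<in> Arr D \<Longrightarrow>
        Dom D x = Dom D y \<Longrightarrow> Cod D x = Dom D f' \<Longrightarrow> Cod D y = Dom D g' \<Longrightarrow>
        Comp D f' x = Comp D g' y \<Longrightarrow>
        (\<exists>!u. u \<in> hom D (Dom D x) (Dom D g) \<and> Comp D g u = x \<and> Comp D q' u = y)"
    using P2 unfolding pullback_def by blast
  note cc = cat_comp[OF D] and ca = cat_assoc[OF D]
  have qq: "Comp D q' q \<in> Arr D" "Dom D (Comp D q' q) = Dom D q" "Cod D (Comp D q' q) = Cod D q'"
    using cc t1 t2 by auto
  have ff: "Comp D f' f \<in> Arr D" "Dom D (Comp D f' f) = Dom D f" "Cod D (Comp D f' f) = Cod D f'"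
    using cc t1 t2 by auto
  have comm: "Comp D (Comp D f' f) p = Comp D g' (Comp D q' q)"
  proof -
    have "Comp D (Comp D f' f) p = Comp D f' (Comp D f p)" using ca[of p f f'] t1 t2 by simp
    also have "\<dots> = Comp D f' (Comp D g q)" using t1 by simp
    also have "\<dots> = Comp D (Comp D f' g) q" using ca[of q g f'] t1 t2 by simp
    also have "\<dots> = Comp D (Comp D g' q') q" using t2 by simp
    also have "\<dots> = Comp D g' (Comp D q' q)" using ca[of q q' g'] t1 t2 by simp
    finally show ?thesis .
  qed
  have univ: "\<forall>x \<in> Arr D. \<forall>y \<in> Arr D.
        Dom D x = Dom D y \<and> Cod D x = Dom D (Comp D f' f) \<and> Cod D y = Dom D g' \<and>
        Comp D (Comp D f' f) x = Comp D g' y \<longrightarrow>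
        (\<exists>!u. u \<in> hom D (Dom D x) (Dom D p) \<and> Comp D p u = x \<and> Comp D (Comp D q' q) u = y)"
  proof (intro ballI impI)
    fix x y assume x: "x \<in> Arr D" and y: "y \<in> Arr D" and
      H: "Dom D x = Dom D y \<and> Cod D x = Dom D (Comp D f' f) \<and> Cod D y = Dom D g' \<and>
        Comp D (Comp D f' f) x = Comp D g' y"
    have cx: "Cod D x = Dom D f" using H ff by simp
    have fx: "Comp D f x \<in> Arr D" "Dom D (Comp D f x) = Dom D x" "Cod D (Comp D f x) = Dom D f'"
      using cc x cx t1 t2 by auto
    have e1: "Comp D f' (Comp D f x) = Comp D g' y"
      using H ca x cx t1 t2 by metis
    obtain v where v: "v \<in> hom D (Dom D x) (Dom D g)" "Comp D g v = Comp D f x" "Comp D q' v = y"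
      and vu: "\<And>w. w \<in> hom D (Dom D x) (Dom D g) \<and> Comp D g w = Comp D f x \<and> Comp D q' w = y \<Longrightarrow> w = v"
      using u2[OF fx(1) y] fx H e1 by metis
    have va: "v \<in> Arr D" "Dom D v = Dom D x" "Cod D v = Dom D g" using v(1) unfolding hom_def by auto
    obtain u where u: "u \<in> hom D (Dom D x) (Dom D p)" "Comp D p u = x" "Comp D q u = v"
      and uu: "\<And>w. w \<in> hom D (Dom D x) (Dom D p) \<and> Comp D p w = x \<and> Comp D q w = v \<Longrightarrow> w = u"
      using u1[OF x va(1)] va cx v(2) by metis
    have ua: "u \<in> Arr D" "Dom D u = Dom D x" "Cod D u = Dom D p" using u(1) unfolding hom_def by auto
    show "\<exists>!u. u \<in> hom D (Dom D x) (Dom D p) \<and> Comp D p u = x \<and> Comp D (Comp D q' q) u = y"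
    proof (rule ex1I[of _ u])
      have "Comp D (Comp D q' q) u = Comp D q' (Comp D q u)" using ca ua t1 t2 by metis
      then show "u \<in> hom D (Dom D x) (Dom D p) \<and> Comp D p u = x \<and> Comp D (Comp D q' q) u = y"
        using u v by simp
    next
      fix w assume w: "w \<in> hom D (Dom D x) (Dom D p) \<and> Comp D p w = x \<and> Comp D (Comp D q' q) w = y"
      have wa: "w \<in> Arr D" "Dom D w = Dom D x" "Cod D w = Dom D p" using w unfolding hom_def by auto
      have qw: "Comp D q w \<in> hom D (Dom D x) (Dom D g)"
        using cc wa t1 unfolding hom_def by auto
      have "Comp D g (Comp D q w) = Comp D (Comp D g q) w" using ca wa t1 by metis
      also have "\<dots> = Comp D (Comp D f p) w" using t1 by simp
      also have "\<dots> = Comp D f x" using ca wa t1 w by metis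
      finally have g1: "Comp D g (Comp D q w) = Comp D f x" .
      have "Comp D q' (Comp D q w) = y" using ca wa t1 t2 w by metis
      then have "Comp D q w = v" using vu qw g1 by blast
      then show "w = u" using uu w by blast
    qed
  qed
  show ?thesis unfolding pullback_def using t1 t2 qq ff comm univ by auto
qed

lemma pb_cancel:
  assumes D: "category D" and P2: "pullback D g q' f' g'"
    and P: "pullback D p (Comp D q' q) (Comp D f' f) g'"
    and t1: "p \<in> Arr D" "q \<in> Arr D" "f \<in> Arr D" "g \<in> Arr D"
    "Dom D p = Dom D q" "Cod D p = Dom D f" "Cod D q = Dom D g" "Cod D f = Cod D g"
    "Comp D f p = Comp D g q"
  shows "pullback D p q f g"
proof -
  have t2: "q' \<in> Arr D" "f' \<in> Arr D" "g' \<in> Arr D"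
    "Dom D g = Dom D q'" "Cod D g = Dom D f'" "Cod D q' = Dom D g'" "Cod D f' = Cod D g'"
    "Comp D f' g = Comp D g' q'"
    using P2 unfolding pullback_def by auto
  have u2: "\<And>x y. x \<in> Arr D \<Longrightarrow> y \<in> Arr D \<Longrightarrow>
        Dom D x = Dom D y \<Longrightarrow> Cod D x = Dom D f' \<Longrightarrow> Cod D y = Dom D g' \<Longrightarrow>
        Comp D f' x = Comp D g' y \<Longrightarrow>
        (\<exists>!u. u \<in> hom D (Dom D x) (Dom D g) \<and> Comp D g u = x \<and> Comp D q' u = y)"
    using P2 unfolding pullback_def by blast
  note cc = cat_comp[OF D] and ca = cat_assoc[OF D]
  have ff: "Comp D f' f \<in> Arr D" "Dom D (Comp D f' f) = Dom D f" "Cod D (Comp D f' f) = Cod D f'"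
    using cc t1 t2 by auto
  have u: "\<And>x y. x \<in> Arr D \<Longrightarrow> y \<in> Arr D \<Longrightarrow>
        Dom D x = Dom D y \<Longrightarrow> Cod D x = Dom D f \<Longrightarrow> Cod D y = Dom D g' \<Longrightarrow>
        Comp D (Comp D f' f) x = Comp D g' y \<Longrightarrow>
        (\<exists>!u. u \<in> hom D (Dom D x) (Dom D p) \<and> Comp D p u = x \<and> Comp D (Comp D q' q) u = y)"
    using P ff unfolding pullback_def by metis
  have univ: "\<forall>x \<in> Arr D. \<forall>y \<in> Arr D.
        Dom D x = Dom D y \<and> Cod D x = Dom D f \<and> Cod D y = Dom D g \<and>
        Comp D f x = Comp D g y \<longrightarrow>
        (\<exists>!u. u \<in> hom D (Dom D x) (Dom D p) \<and> Comp D p u = x \<and> Comp D q u = y)"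
  proof (intro ballI impI)
    fix x y assume x: "x \<in> Arr D" and y: "y \<in> Arr D" and
      H: "Dom D x = Dom D y \<and> Cod D x = Dom D f \<and> Cod D y = Dom D g \<and>
        Comp D f x = Comp D g y"
    have qy: "Comp D q' y \<in> Arr D" "Dom D (Comp D q' y) = Dom D x" "Cod D (Comp D q' y) = Dom D g'"
      using cc y H t2 by auto
    have fx: "Comp D f x \<in> Arr D" "Dom D (Comp D f x) = Dom D x" "Cod D (Comp D f x) = Dom D f'"
      using cc[of x f] x H[THEN conjunct2, THEN conjunct1] t1 t2 by auto
    have e0: "Comp D f' (Comp D f x) = Comp D g' (Comp D q' y)"
    proof -
      have "Comp D f' (Comp D f x) = Comp D f' (Comp D g y)" using H by simp
      also have "\<dots> = Comp D (Comp D f' g) y" using ca[of y g f'] H y t1 t2 by simp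
      also have "\<dots> = Comp D (Comp D g' q') y" using t2 by simp
      also have "\<dots> = Comp D g' (Comp D q' y)" using ca[of y q' g'] H y t1 t2 by simp
      finally show ?thesis .
    qed
    have e1: "Comp D (Comp D f' f) x = Comp D g' (Comp D q' y)"
      using e0 ca[of x f f'] x H t1 t2 by simp
    obtain u where uh: "u \<in> hom D (Dom D x) (Dom D p)" "Comp D p u = x" "Comp D (Comp D q' q) u = Comp D q' y"
      and uu: "\<And>w. w \<in> hom D (Dom D x) (Dom D p) \<and> Comp D p w = x \<and> Comp D (Comp D q' q) w = Comp D q' y \<Longrightarrow> w = u"
      using u[OF x qy(1)] qy H e1 by metis
    have ua: "u \<in> Arr D" "Dom D u = Dom D x" "Cod D u = Dom D p" using uh(1) unfolding hom_def by auto
    have U2: "\<exists>!w. w \<in> hom D (Dom D x) (Dom D g) \<and> Comp D g w = Comp D f x \<and> Comp D q' w = Comp D q' y"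
      using u2[OF fx(1) qy(1)] fx qy e0 by metis
    have yh: "y \<in> hom D (Dom D x) (Dom D g) \<and> Comp D g y = Comp D f x \<and> Comp D q' y = Comp D q' y"
      using y H unfolding hom_def by auto
    have quh: "Comp D q u \<in> hom D (Dom D x) (Dom D g)" using cc ua t1 unfolding hom_def by auto
    have "Comp D g (Comp D q u) = Comp D (Comp D g q) u" using ca[of u q g] ua t1 by simp
    also have "\<dots> = Comp D (Comp D f p) u" using t1 by simp
    also have "\<dots> = Comp D f x" using ca[of u p f] ua t1 uh by simp
    finally have g1: "Comp D g (Comp D q u) = Comp D f x" .
    have g2: "Comp D q' (Comp D q u) = Comp D q' y" using ca[of u q q'] ua t1 t2 uh by simp
    have quy: "Comp D q u = y" using U2 yh quh g1 g2 by blast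
    show "\<exists>!u. u \<in> hom D (Dom D x) (Dom D p) \<and> Comp D p u = x \<and> Comp D q u = y"
    proof (rule ex1I[of _ u])
      show "u \<in> hom D (Dom D x) (Dom D p) \<and> Comp D p u = x \<and> Comp D q u = y"
        using uh quy by simp
    next
      fix w assume w: "w \<in> hom D (Dom D x) (Dom D p) \<and> Comp D p w = x \<and> Comp D q w = y"
      have wa: "w \<in> Arr D" "Dom D w = Dom D x" "Cod D w = Dom D p" using w unfolding hom_def by auto
      have "Comp D (Comp D q' q) w = Comp D q' y" using ca[of w q q'] wa t1 t2 w by simp
      then show "w = u" using uu w by blast
    qed
  qed
  show ?thesis unfolding pullback_def using t1 univ by auto
qed

lemma fc_simps:
  "Arr (functor_cat A D) = {\<tau>. natural_transformation A D \<tau>}"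
  "Dom (functor_cat A D) (F, G, \<eta>) = F"
  "Cod (functor_cat A D) (F, G, \<eta>) = G"
  "Comp (functor_cat A D) (G', H, \<theta>) (F, G, \<eta>) = (F, H, \<lambda>x \<in> Obj A. Comp D (\<theta> x) (\<eta> x))"
  by (simp_all add: functor_cat_def)

lemma cfc_simps:
  "Obj (cart_functor_cat A D) = Obj (functor_cat A D)"
  "Arr (cart_functor_cat A D) = {\<tau>. cartesian A D \<tau>}"
  "Dom (cart_functor_cat A D) = Dom (functor_cat A D)"
  "Cod (cart_functor_cat A D) = Cod (functor_cat A D)"
  "Id (cart_functor_cat A D) = Id (functor_cat A D)"
  "Comp (cart_functor_cat A D) = Comp (functor_cat A D)"
  by (simp_all add: cart_functor_cat_def)

lemma nt_facts:
  assumes "natural_transformation A D (F, G, \<eta>)" "category A" "u \<in> Arr A"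
  shows "farr F u \<in> Arr D" "farr G u \<in> Arr D" "\<eta> (Dom A u) \<in> Arr D" "\<eta> (Cod A u) \<in> Arr D"
    "Dom D (farr F u) = Dom D (\<eta> (Dom A u))" "Cod D (farr F u) = Dom D (\<eta> (Cod A u))"
    "Cod D (\<eta> (Dom A u)) = Dom D (farr G u)" "Cod D (\<eta> (Cod A u)) = Cod D (farr G u)"
    "Comp D (\<eta> (Cod A u)) (farr F u) = Comp D (farr G u) (\<eta> (Dom A u))"
proof -
  have o: "Dom A u \<in> Obj A" "Cod A u \<in> Obj A" using assms(2,3) unfolding category_def by auto
  have F: "is_functor A D F" and G: "is_functor A D G" using assms(1)
    unfolding natural_transformation_def by auto
  have h: "\<forall>x \<in> Obj A. \<eta> x \<in> hom D (fobj F x) (fobj G x)" using assms(1)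
    unfolding natural_transformation_def by auto
  have fu: "farr F u \<in> hom D (fobj F (Dom A u)) (fobj F (Cod A u))"
    "farr G u \<in> hom D (fobj G (Dom A u)) (fobj G (Cod A u))"
    using F G assms(3) unfolding is_functor_def by auto
  show "farr F u \<in> Arr D" "farr G u \<in> Arr D" "\<eta> (Dom A u) \<in> Arr D" "\<eta> (Cod A u) \<in> Arr D"
    "Dom D (farr F u) = Dom D (\<eta> (Dom A u))" "Cod D (farr F u) = Dom D (\<eta> (Cod A u))"
    "Cod D (\<eta> (Dom A u)) = Dom D (farr G u)" "Cod D (\<eta> (Cod A u)) = Cod D (farr G u)"
    using fu h o unfolding hom_def by auto
  show "Comp D (\<eta> (Cod A u)) (farr F u) = Comp D (farr G u) (\<eta> (Dom A u))"
    using assms(1,3) unfolding natural_transformation_def by auto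
qed

lemma comp_cart:
  assumes A: "category A" and D: "category D" and d: "cartesian A D d" and m: "cartesian A D m"
    and dm: "Cod (functor_cat A D) d = Dom (functor_cat A D) m"
    and n: "natural_transformation A D (Comp (functor_cat A D) m d)"
  shows "cartesian A D (Comp (functor_cat A D) m d)"
proof -
  obtain F G \<eta> where d': "d = (F, G, \<eta>)" by (cases d) auto
  obtain G' H \<theta> where m': "m = (G', H, \<theta>)" by (cases m) auto
  have GG: "G' = G" using dm d' m' by (simp add: fc_simps)
  have c: "Comp (functor_cat A D) m d = (F, H, \<lambda>x \<in> Obj A. Comp D (\<theta> x) (\<eta> x))"
    using d' m' by (simp add: fc_simps)
  have "\<forall>u \<in> Arr A. pullback D (farr F u) ((\<lambda>x \<in> Obj A. Comp D (\<theta> x) (\<eta> x)) (Dom A u))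
          ((\<lambda>x \<in> Obj A. Comp D (\<theta> x) (\<eta> x)) (Cod A u)) (farr H u)"
  proof
    fix u assume u: "u \<in> Arr A"
    have o: "Dom A u \<in> Obj A" "Cod A u \<in> Obj A" using A u unfolding category_def by auto
    have P1: "pullback D (farr F u) (\<eta> (Dom A u)) (\<eta> (Cod A u)) (farr G u)"
      using d d' u unfolding cartesian_def by auto
    have P2: "pullback D (farr G u) (\<theta> (Dom A u)) (\<theta> (Cod A u)) (farr H u)"
      using m m' GG u unfolding cartesian_def by auto
    show "pullback D (farr F u) ((\<lambda>x \<in> Obj A. Comp D (\<theta> x) (\<eta> x)) (Dom A u))
          ((\<lambda>x \<in> Obj A. Comp D (\<theta> x) (\<eta> x)) (Cod A u)) (farr H u)"
      using pb_paste[OF D P1 P2] o by simp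
  qed
  then show ?thesis using n c unfolding cartesian_def by simp
qed

lemma cancel_cart:
  assumes A: "category A" and D: "category D" and d: "natural_transformation A D d"
    and m: "cartesian A D m"
    and dm: "Cod (functor_cat A D) d = Dom (functor_cat A D) m"
    and n: "cartesian A D (Comp (functor_cat A D) m d)"
  shows "cartesian A D d"
proof -
  obtain F G \<eta> where d': "d = (F, G, \<eta>)" by (cases d) auto
  obtain G' H \<theta> where m': "m = (G', H, \<theta>)" by (cases m) auto
  have GG: "G' = G" using dm d' m' by (simp add: fc_simps)
  have c: "Comp (functor_cat A D) m d = (F, H, \<lambda>x \<in> Obj A. Comp D (\<theta> x) (\<eta> x))"
    using d' m' by (simp add: fc_simps)
  have "\<forall>u \<in> Arr A. pullback D (farr F u) (\<eta> (Dom A u)) (\<eta> (Cod A u)) (farr G u)"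
  proof
    fix u assume u: "u \<in> Arr A"
    have o: "Dom A u \<in> Obj A" "Cod A u \<in> Obj A" using A u unfolding category_def by auto
    have P: "pullback D (farr F u) ((\<lambda>x \<in> Obj A. Comp D (\<theta> x) (\<eta> x)) (Dom A u))
          ((\<lambda>x \<in> Obj A. Comp D (\<theta> x) (\<eta> x)) (Cod A u)) (farr H u)"
      using n c u unfolding cartesian_def by auto
    have P': "pullback D (farr F u) (Comp D (\<theta> (Dom A u)) (\<eta> (Dom A u)))
          (Comp D (\<theta> (Cod A u)) (\<eta> (Cod A u))) (farr H u)"
      using P o by simp
    have P2: "pullback D (farr G u) (\<theta> (Dom A u)) (\<theta> (Cod A u)) (farr H u)"
      using m m' GG u unfolding cartesian_def by auto
    note nf = nt_facts[OF d[unfolded d'] A u]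
    show "pullback D (farr F u) (\<eta> (Dom A u)) (\<eta> (Cod A u)) (farr G u)"
      by (rule pb_cancel[OF D P2 P' nf(1,3,4,2,5-9)])
  qed
  then show ?thesis using d d' unfolding cartesian_def by simp
qed

lemma cart_nat: "cartesian A D \<tau> \<Longrightarrow> natural_transformation A D \<tau>"
  unfolding cartesian_def by simp

lemma hom_cfc: "hom (cart_functor_cat A D) x y \<subseteq> hom (functor_cat A D) x y"
  unfolding hom_def cfc_simps fc_simps cartesian_def by auto

lemma iso_cfc: "iso (cart_functor_cat A D) f \<Longrightarrow> iso (functor_cat A D) f \<and> cartesian A D f"
  unfolding iso_def cfc_simps using hom_cfc[of A D]
  by (auto simp: fc_simps cartesian_def)

theorem lemma4p8:
  fixes A :: "('oa, 'aa) cat" and D :: "('od, 'ad) cat"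
    and E M :: "('oa, 'aa, 'od, 'ad) nt set"
  assumes "category A" and "category D"
    and "ofs (functor_cat A D) E M"
    and "\<forall>\<tau> \<in> M. cartesian A D \<tau>"
  shows "ofs (cart_functor_cat A D) (E \<inter> {\<tau>. cartesian A D \<tau>}) (M \<inter> {\<tau>. cartesian A D \<tau>})"
proof -
  let ?C = "functor_cat A D" and ?C' = "cart_functor_cat A D"
  have EA: "E \<subseteq> Arr ?C" and MA: "M \<subseteq> Arr ?C"
    and isoE: "{f. iso ?C f} \<subseteq> E" and isoM: "{f. iso ?C f} \<subseteq> M"
    and compE: "\<forall>f \<in> E. \<forall>g \<in> E. Cod ?C f = Dom ?C g \<longrightarrow> Comp ?C g f \<in> E"
    and compM: "\<forall>f \<in> M. \<forall>g \<in> M. Cod ?C f = Dom ?C g \<longrightarrow> Comp ?C g f \<in> M"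
    and lift: "\<forall>e \<in> E. \<forall>m \<in> M. \<forall>f \<in> Arr ?C. \<forall>g \<in> Arr ?C.
        Dom ?C f = Dom ?C e \<and> Cod ?C f = Dom ?C m \<and> Dom ?C g = Cod ?C e \<and> Cod ?C g = Cod ?C m \<and>
        Comp ?C g e = Comp ?C m f \<longrightarrow>
        (\<exists>!d. d \<in> hom ?C (Cod ?C e) (Dom ?C m) \<and> Comp ?C d e = f \<and> Comp ?C m d = g)"
    and fact: "\<forall>h \<in> Arr ?C. \<exists>e \<in> E. \<exists>m \<in> M. Cod ?C e = Dom ?C m \<and> h = Comp ?C m e"
    using assms(3) unfolding ofs_def by blast+
  have A: "category A" and D: "category D" by fact+
  have Mc: "\<And>m. m \<in> M \<Longrightarrow> cartesian A D m" using assms(4) by blast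
  have EnC: "\<And>e. e \<in> E \<Longrightarrow> natural_transformation A D e" using EA by (auto simp: fc_simps)
  have g1: "E \<inter> {\<tau>. cartesian A D \<tau>} \<subseteq> Arr ?C'" "M \<inter> {\<tau>. cartesian A D \<tau>} \<subseteq> Arr ?C'"
    by (auto simp: cfc_simps)
  have g2: "{f. iso ?C' f} \<subseteq> E \<inter> {\<tau>. cartesian A D \<tau>}" "{f. iso ?C' f} \<subseteq> M \<inter> {\<tau>. cartesian A D \<tau>}"
    using iso_cfc[of A D] isoE isoM by blast+
  have g3: "\<forall>f \<in> E \<inter> {\<tau>. cartesian A D \<tau>}. \<forall>g \<in> E \<inter> {\<tau>. cartesian A D \<tau>}.
       Cod ?C' f = Dom ?C' g \<longrightarrow> Comp ?C' g f \<in> E \<inter> {\<tau>. cartesian A D \<tau>}"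
  proof (intro ballI impI)
    fix f g assume f: "f \<in> E \<inter> {\<tau>. cartesian A D \<tau>}" and g: "g \<in> E \<inter> {\<tau>. cartesian A D \<tau>}"
      and fg: "Cod ?C' f = Dom ?C' g"
    have fg': "Cod ?C f = Dom ?C g" using fg by (simp add: cfc_simps)
    have inE: "Comp ?C g f \<in> E" using compE f g fg' by blast
    have "cartesian A D (Comp ?C g f)"
      using comp_cart[OF A D _ _ fg' EnC[OF inE]] f g by blast
    then show "Comp ?C' g f \<in> E \<inter> {\<tau>. cartesian A D \<tau>}" using inE by (simp add: cfc_simps)
  qed
  have g4: "\<forall>f \<in> M \<inter> {\<tau>. cartesian A D \<tau>}. \<forall>g \<in> M \<inter> {\<tau>. cartesian A D \<tau>}.
       Cod ?C' f = Dom ?C' g \<longrightarrow> Comp ?C' g f \<in> M \<inter> {\<tau>. cartesian A D \<tau>}"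
    using compM Mc by (auto simp: cfc_simps)
  have g5: "\<forall>e \<in> E \<inter> {\<tau>. cartesian A D \<tau>}. \<forall>m \<in> M \<inter> {\<tau>. cartesian A D \<tau>}. \<forall>f \<in> Arr ?C'. \<forall>g \<in> Arr ?C'.
        Dom ?C' f = Dom ?C' e \<and> Cod ?C' f = Dom ?C' m \<and> Dom ?C' g = Cod ?C' e \<and> Cod ?C' g = Cod ?C' m \<and>
        Comp ?C' g e = Comp ?C' m f \<longrightarrow>
        (\<exists>!d. d \<in> hom ?C' (Cod ?C' e) (Dom ?C' m) \<and> Comp ?C' d e = f \<and> Comp ?C' m d = g)"
  proof (intro ballI impI)
    fix e m f g assume e: "e \<in> E \<inter> {\<tau>. cartesian A D \<tau>}" and m: "m \<in> M \<inter> {\<tau>. cartesian A D \<tau>}"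
      and f: "f \<in> Arr ?C'" and g: "g \<in> Arr ?C'"
      and H: "Dom ?C' f = Dom ?C' e \<and> Cod ?C' f = Dom ?C' m \<and> Dom ?C' g = Cod ?C' e \<and> Cod ?C' g = Cod ?C' m \<and>
        Comp ?C' g e = Comp ?C' m f"
    have fc: "cartesian A D f" and gc: "cartesian A D g" using f g by (auto simp: cfc_simps)
    have f': "f \<in> Arr ?C" and g': "g \<in> Arr ?C" using fc gc by (auto simp: fc_simps cartesian_def)
    have H': "Dom ?C f = Dom ?C e \<and> Cod ?C f = Dom ?C m \<and> Dom ?C g = Cod ?C e \<and> Cod ?C g = Cod ?C m \<and>
        Comp ?C g e = Comp ?C m f" using H by (simp add: cfc_simps)
    have ex: "\<exists>!d. d \<in> hom ?C (Cod ?C e) (Dom ?C m) \<and> Comp ?C d e = f \<and> Comp ?C m d = g"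
      using lift e m f' g' H' by blast
    then obtain d where d: "d \<in> hom ?C (Cod ?C e) (Dom ?C m)" "Comp ?C d e = f" "Comp ?C m d = g"
      by blast
    have dn: "natural_transformation A D d" and dm: "Cod ?C d = Dom ?C m"
      using d(1) unfolding hom_def by (auto simp: fc_simps)
    have dc: "cartesian A D d"
      using cancel_cart[OF A D dn _ dm] m d(3) gc by blast
    have dh: "d \<in> hom ?C' (Cod ?C' e) (Dom ?C' m)"
      using d(1) dc unfolding hom_def by (auto simp: cfc_simps)
    show "\<exists>!d. d \<in> hom ?C' (Cod ?C' e) (Dom ?C' m) \<and> Comp ?C' d e = f \<and> Comp ?C' m d = g"
    proof (rule ex1I[of _ d])
      show "d \<in> hom ?C' (Cod ?C' e) (Dom ?C' m) \<and> Comp ?C' d e = f \<and> Comp ?C' m d = g"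
        using dh d by (simp add: cfc_simps)
    next
      fix d' assume d': "d' \<in> hom ?C' (Cod ?C' e) (Dom ?C' m) \<and> Comp ?C' d' e = f \<and> Comp ?C' m d' = g"
      then have "d' \<in> hom ?C (Cod ?C e) (Dom ?C m) \<and> Comp ?C d' e = f \<and> Comp ?C m d' = g"
        using hom_cfc[of A D] by (auto simp: cfc_simps)
      then show "d' = d" using ex d by blast
    qed
  qed
  have g6: "\<forall>h \<in> Arr ?C'. \<exists>e \<in> E \<inter> {\<tau>. cartesian A D \<tau>}. \<exists>m \<in> M \<inter> {\<tau>. cartesian A D \<tau>}.
        Cod ?C' e = Dom ?C' m \<and> h = Comp ?C' m e"
  proof
    fix h assume h: "h \<in> Arr ?C'"
    then have hc: "cartesian A D h" by (simp add: cfc_simps)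
    then have "h \<in> Arr ?C" by (simp add: fc_simps cartesian_def)
    then obtain e m where em: "e \<in> E" "m \<in> M" "Cod ?C e = Dom ?C m" "h = Comp ?C m e"
      using fact by blast
    have ec: "cartesian A D e"
      using cancel_cart[OF A D EnC[OF em(1)] Mc[OF em(2)] em(3)] hc em(4) by simp
    show "\<exists>e \<in> E \<inter> {\<tau>. cartesian A D \<tau>}. \<exists>m \<in> M \<inter> {\<tau>. cartesian A D \<tau>}.
        Cod ?C' e = Dom ?C' m \<and> h = Comp ?C' m e"
      using em ec Mc[OF em(2)] by (auto simp: cfc_simps)
  qed
  show ?thesis unfolding ofs_def using g1 g2 g3 g4 g5 g6 by blast
qed

end
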